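(* Let $\mathcal{G}_1,\ldots,\mathcal{G}_p$ be non-negatively weighted digraphs on the node set $\{1,\ldots,N\}$ whose union contains a directed spanning tree, and let $n\ge1$. For each $i$, let $\delta_i(x)=x-\sum_{j=1}^{\chi_i}\big(\gamma_{i,j}\beta_{i,j}^{\mathrm{T}}\otimes I_n\big)x$ for $x\in\mathbb{R}^{nN}$, with $\chi_i,\gamma_{i,j},\beta_{i,j}$ constructed from $\mathcal{G}_i$ as described in the context. Then $$\bigcap_{i=1}^p\{x\in\mathbb{R}^{nN}:\delta_i(x)=\mathbf{0}\}=\{\mathbf{1}_N\otimes u:\ u\in\mathbb{R}^n\}.$$
   Context: A weighted digraph on $\{1,\ldots,N\}$ has weights $a_{ij}\ge0$, $a_{ii}=0$, with $a_{ij}>0$ iff $(j,i)$ is an edge (directed from $j$ to $i$); its Laplacian is $L=\mathrm{diag}\{\sum_ja_{1j},\ldots,\sum_ja_{Nj}\}-[a_{ij}]$. A digraph contains a directed spanning tree if some node has a directed path to every other node; the union of graphs on the same node set has the union of the edge sets. For a node $j$, $R(j)$ is the set consisting of $j$ and all nodes reachable from $j$ by a directed path. A reach is a maximal such set: $R=R(i)$ for some $i$ with no $j$ such that $R(i)\subsetneq R(j)$. For a digraph $\mathcal{G}$ with Laplacian $L$ and reaches $R_1,\ldots,R_\chi$, the exclusive part of $R_j$ is $H_j=R_j\setminus\bigcup_{l\ne j}R_l$ and its common part is $C_j=R_j\setminus H_j$. It is known that $\mathrm{Ker}(L)$ has a basis $\gamma_1,\ldots,\gamma_\chi\in\mathbb{R}^N$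 with $\gamma_j(s)=0$ for $s\notin R_j$, $\gamma_j(s)=1$ for $s\in H_j$, $\gamma_j(s)\in(0,1)$ for $s\in C_j$, and $\sum_j\gamma_j=\mathbf{1}_N$; these are the vectors $\gamma_j$ used. For each reach $R_j$, let $V_j\subset H_j$ be the set of nodes $i$ with $R(i)=R_j$ (a strongly connected set receiving no edges from outside); let $L_{jj}$ be the principal submatrix of $L$ indexed by $V_j$, and let $v_j\in\mathbb{R}^{|V_j|}$ satisfy $v_j^{\mathrm{T}}L_{jj}=0$ and $v_j^{\mathrm{T}}\mathbf{1}_{|V_j|}=1$. Then $\beta_j\in\mathbb{R}^N$ equals $v_j$ on the coordinates in $V_j$ and $0$ elsewhere (so $\beta_j^{\mathrm{T}}L=0$). Applying this construction to $\mathcal{G}_i$ gives $\chi_i$, $\gamma_{i,j}$, $\beta_{i,j}$. $\otimes$ is the Kronecker product. *)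

theory Defs
  imports "Jordan_Normal_Form.Matrix"
begin

text \<open>Nodes are 0,...,N-1 (the paper's 1,...,N shifted by one).
  A weighted digraph is given by its weight matrix W (N x N), W $$ (i,j) = a_ij;
  there is an edge from j to i iff a_ij > 0.\<close>

definition weight_matrix :: "nat \<Rightarrow> real mat \<Rightarrow> bool" where
  "weight_matrix N W \<longleftrightarrow> W \<in> carrier_mat N N \<and>
     (\<forall>i<N. \<forall>j<N. 0 \<le> W $$ (i,j)) \<and> (\<forall>i<N. W $$ (i,i) = 0)"

definition ones_vec :: "nat \<Rightarrow> real vec" where
  "ones_vec N = vec N (\<lambda>_. 1)"

definition edges :: "nat \<Rightarrow> real mat \<Rightarrow> (nat \<times> nat) set" where
  "edges N W = {(j,i). j < N \<and> i < N \<and> 0 < W $$ (i,j)}"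

definition laplacian :: "nat \<Rightarrow> real mat \<Rightarrow> real mat" where
  "laplacian N W = mat N N (\<lambda>(i,j). (if i = j then (\<Sum>l<N. W $$ (i,l)) else 0) - W $$ (i,j))"

definition has_spanning_tree :: "nat \<Rightarrow> (nat \<times> nat) set \<Rightarrow> bool" where
  "has_spanning_tree N E \<longleftrightarrow> (\<exists>r<N. \<forall>i<N. (r,i) \<in> E\<^sup>*)"

definition reach_set :: "nat \<Rightarrow> real mat \<Rightarrow> nat \<Rightarrow> nat set" where
  "reach_set N W j = {i. (j,i) \<in> (edges N W)\<^sup>*}"

definition is_reach :: "nat \<Rightarrow> real mat \<Rightarrow> nat set \<Rightarrow> bool" where
  "is_reach N W R \<longleftrightarrow> (\<exists>i<N. R = reach_set N W i \<and> \<not> (\<exists>j<N. R \<subset> reach_set N W j))"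

definition exclusive_part :: "(nat \<Rightarrow> nat set) \<Rightarrow> nat \<Rightarrow> nat \<Rightarrow> nat set" where
  "exclusive_part R chi j = R j - (\<Union>l\<in>{..<chi} - {j}. R l)"

definition common_part :: "(nat \<Rightarrow> nat set) \<Rightarrow> nat \<Rightarrow> nat \<Rightarrow> nat set" where
  "common_part R chi j = R j - exclusive_part R chi j"

definition root_set :: "nat \<Rightarrow> real mat \<Rightarrow> nat set \<Rightarrow> nat set" where
  "root_set N W Rj = {i. i < N \<and> reach_set N W i = Rj}"

text \<open>R enumerates the reaches without repetition; gamma 0..chi-1 is the kernel basis
  of the Laplacian with the stated properties; beta j is v_j on V_j and 0 elsewhere,
  where v_j^T L_jj = 0 and v_j^T 1 = 1.\<close>
definition reach_data ::
  "nat \<Rightarrow> real mat \<Rightarrow> nat \<Rightarrow> (nat \<Rightarrow> nat set) \<Rightarrow> (nat \<Rightarrow> real vec) \<Rightarrow> (nat \<Rightarrow> real vec) \<Rightarrow> bool" where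
  "reach_data N W chi R gam bet \<longleftrightarrow>
     {R j | j. j < chi} = {S. is_reach N W S} \<and> inj_on R {..<chi} \<and>
     (\<forall>j<chi. gam j \<in> carrier_vec N \<and> laplacian N W *\<^sub>v gam j = 0\<^sub>v N) \<and>
     (\<forall>c. finsum_vec TYPE(real) N (\<lambda>j. c j \<cdot>\<^sub>v gam j) {..<chi} = 0\<^sub>v N \<longrightarrow> (\<forall>j<chi. c j = 0)) \<and>
     (\<forall>y \<in> carrier_vec N. laplacian N W *\<^sub>v y = 0\<^sub>v N \<longrightarrow>
        (\<exists>c. y = finsum_vec TYPE(real) N (\<lambda>j. c j \<cdot>\<^sub>v gam j) {..<chi})) \<and>
     (\<forall>j<chi. \<forall>s<N.
        (s \<notin> R j \<longrightarrow> gam j $ s = 0) \<and>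
        (s \<in> exclusive_part R chi j \<longrightarrow> gam j $ s = 1) \<and>
        (s \<in> common_part R chi j \<longrightarrow> 0 < gam j $ s \<and> gam j $ s < 1)) \<and>
     finsum_vec TYPE(real) N gam {..<chi} = ones_vec N \<and>
     (\<forall>j<chi. bet j \<in> carrier_vec N \<and>
        (\<forall>s<N. s \<notin> root_set N W (R j) \<longrightarrow> bet j $ s = 0) \<and>
        (\<forall>t\<in>root_set N W (R j). (\<Sum>s\<in>root_set N W (R j). bet j $ s * laplacian N W $$ (s,t)) = 0) \<and>
        (\<Sum>s\<in>root_set N W (R j). bet j $ s) = 1)"

definition kron_mat :: "'a::times mat \<Rightarrow> 'a mat \<Rightarrow> 'a mat" where
  "kron_mat A B = mat (dim_row A * dim_row B) (dim_col A * dim_col B)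
     (\<lambda>(i,j). A $$ (i div dim_row B, j div dim_col B) * B $$ (i mod dim_row B, j mod dim_col B))"

definition kron_vec :: "'a::times vec \<Rightarrow> 'a vec \<Rightarrow> 'a vec" where
  "kron_vec a b = vec (dim_vec a * dim_vec b) (\<lambda>i. a $ (i div dim_vec b) * b $ (i mod dim_vec b))"

definition delta_map :: "nat \<Rightarrow> nat \<Rightarrow> nat \<Rightarrow> (nat \<Rightarrow> real vec) \<Rightarrow> (nat \<Rightarrow> real vec) \<Rightarrow> real vec \<Rightarrow> real vec" where
  "delta_map N n chi gam bet x =
     x - finsum_vec TYPE(real) (N * n) (\<lambda>j. kron_mat (mat_of_cols N [gam j] * mat_of_rows N [bet j]) (1\<^sub>m n) *\<^sub>v x) {..<chi}"

end

theory Submission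
  imports Defs
begin

lemma sum_split_blocks:
  fixes f :: "nat \<Rightarrow> 'a::comm_monoid_add"
  shows "(\<Sum>c<N*n. f c) = (\<Sum>s<N. \<Sum>k<n. f (s*n+k))"
proof (induction N)
  case 0 then show ?case by simp
next
  case (Suc N)
  have "{..<Suc N * n} = {..<N*n} \<union> {N*n..<N*n+n}" by auto
  then have "(\<Sum>c<Suc N*n. f c) = (\<Sum>c<N*n. f c) + (\<Sum>c\<in>{N*n..<N*n+n}. f c)"
    by (simp add: sum.union_disjoint ivl_disj_int)
  also have "(\<Sum>c\<in>{N*n..<N*n+n}. f c) = (\<Sum>k<n. f (N*n+k))"
  proof -
    have "(\<Sum>c\<in>{0+N*n..<n+N*n}. f c) = (\<Sum>k\<in>{0..<n}. f (k + N*n))"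
      by (rule sum.shift_bounds_nat_ivl)
    then show ?thesis by (simp add: lessThan_atLeast0 add.commute)
  qed
  finally show ?case using Suc by simp
qed

lemma kron_apply:
  fixes g b x :: "real vec"
  assumes g: "g \<in> carrier_vec N" and b: "b \<in> carrier_vec N" and x: "x \<in> carrier_vec (N*n)"
    and i: "i < N*n"
  shows "(kron_mat (mat_of_cols N [g] * mat_of_rows N [b]) (1\<^sub>m n) *\<^sub>v x) $ i
     = g$(i div n) * (\<Sum>s<N. b$s * x$(s*n + i mod n))"
proof -
  define A where "A = mat_of_cols N [g] * mat_of_rows N [b]"
  have Ad: "dim_row A = N" "dim_col A = N" unfolding A_def by auto
  have Ae: "A $$ (a,c) = g$a * b$c" if "a < N" "c < N" for a c
    using that g b unfolding A_def
    by (simp add: scalar_prod_def mat_of_cols_def mat_of_rows_def row_def col_def)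
  have npos: "0 < n" using i by (cases n) auto
  have idiv: "i div n < N" using i by (simp add: less_mult_imp_div_less)
  have imod: "i mod n < n" using npos by simp
  have "(kron_mat A (1\<^sub>m n) *\<^sub>v x) $ i = (\<Sum>c<N*n. A $$ (i div n, c div n) * (1\<^sub>m n) $$ (i mod n, c mod n) * x$c)"
    using i x Ad by (simp add: kron_mat_def scalar_prod_def row_def lessThan_atLeast0)
  also have "\<dots> = (\<Sum>s<N. \<Sum>k<n. A $$ (i div n, s) * (1\<^sub>m n) $$ (i mod n, k) * x$(s*n+k))"
    by (subst sum_split_blocks) (intro sum.cong refl, simp add: npos)
  also have "\<dots> = (\<Sum>s<N. A $$ (i div n, s) * x$(s*n+ i mod n))"
  proof (intro sum.cong refl)
    fix s assume "s \<in> {..<N}"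
    have "(\<Sum>k<n. A $$ (i div n, s) * (1\<^sub>m n) $$ (i mod n, k) * x$(s*n+k))
       = (\<Sum>k<n. if k = i mod n then A $$ (i div n, s) * x$(s*n+k) else 0)"
      using imod by (intro sum.cong refl) auto
    also have "\<dots> = A $$ (i div n, s) * x$(s*n+ i mod n)" using imod by (simp add: sum.delta)
    finally show "(\<Sum>k<n. A $$ (i div n, s) * (1\<^sub>m n) $$ (i mod n, k) * x$(s*n+k)) = A $$ (i div n, s) * x$(s*n+ i mod n)" .
  qed
  also have "\<dots> = g$(i div n) * (\<Sum>s<N. b$s * x$(s*n + i mod n))"
    using idiv by (simp add: Ae sum_distrib_left mult.assoc)
  finally show ?thesis unfolding A_def .
qed


lemma lap_harm:
  assumes "s < N"
  shows "(\<Sum>t<N. laplacian N W $$ (s,t) * f t) = (\<Sum>t<N. W $$ (s,t) * (f s - f t))"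
proof -
  have "(\<Sum>t<N. laplacian N W $$ (s,t) * f t)
     = (\<Sum>t<N. (if s = t then (\<Sum>l<N. W $$ (s,l)) * f t else 0) - W $$ (s,t) * f t)"
    using assms by (intro sum.cong refl) (simp add: laplacian_def left_diff_distrib)
  also have "\<dots> = (\<Sum>t<N. (if s = t then (\<Sum>l<N. W $$ (s,l)) * f t else 0)) - (\<Sum>t<N. W $$ (s,t) * f t)"
    by (rule sum_subtractf)
  also have "\<dots> = (\<Sum>t<N. W $$ (s,t)) * f s - (\<Sum>t<N. W $$ (s,t) * f t)"
    using assms by (simp add: sum.delta)
  also have "\<dots> = (\<Sum>t<N. W $$ (s,t) * (f s - f t))"
    by (simp add: sum_distrib_right right_diff_distrib sum_subtractf)
  finally show ?thesis .
qed

lemma max_principle: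
  fixes y :: "nat \<Rightarrow> real"
  assumes wm: "\<forall>i<p. weight_matrix N (W i)"
    and harm: "\<forall>i<p. \<forall>s<N. (\<Sum>t<N. W i $$ (s,t) * (y s - y t)) = 0"
    and le: "\<forall>t<N. y t \<le> m"
    and path: "(r,z) \<in> (\<Union>i<p. edges N (W i))\<^sup>*"
  shows "y z = m \<longrightarrow> y r = m"
  using path
proof (induction rule: rtrancl_induct)
  case base then show ?case by simp
next
  case (step a z)
  show ?case
  proof
    assume yz: "y z = m"
    from step.hyps(2) obtain i where i: "i < p" and e: "(a,z) \<in> edges N (W i)" by auto
    from e have a: "a < N" and z: "z < N" and w: "0 < W i $$ (z,a)" by (auto simp: edges_def)
    have nn: "\<forall>t\<in>{..<N}. 0 \<le> W i $$ (z,t) * (y z - y t)"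
    proof
      fix t assume t: "t \<in> {..<N}"
      have "0 \<le> W i $$ (z,t)" using wm i z t by (auto simp: weight_matrix_def)
      moreover have "0 \<le> y z - y t" using le yz t by auto
      ultimately show "0 \<le> W i $$ (z,t) * (y z - y t)" by simp
    qed
    have "(\<Sum>t<N. W i $$ (z,t) * (y z - y t)) = 0" using harm i z by auto
    with nn have "\<forall>t\<in>{..<N}. W i $$ (z,t) * (y z - y t) = 0"
      by (subst sum_nonneg_eq_0_iff[symmetric]) auto
    with a w have "y a = y z" by force
    with yz step.IH show "y r = m" by simp
  qed
qed

lemma const_principle:
  fixes y :: "nat \<Rightarrow> real"
  assumes wm: "\<forall>i<p. weight_matrix N (W i)"
    and harm: "\<forall>i<p. \<forall>s<N. (\<Sum>t<N. W i $$ (s,t) * (y s - y t)) = 0"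
    and r: "r < N" and paths: "\<forall>t<N. (r,t) \<in> (\<Union>i<p. edges N (W i))\<^sup>*"
    and t: "t < N"
  shows "y t = y r"
proof -
  have ne: "{..<N} \<noteq> {}" using r by auto
  define M where "M = Max (y ` {..<N})"
  have "M \<in> y ` {..<N}" unfolding M_def using ne by (intro Max_in) auto
  then obtain s1 where s1: "s1 < N" "y s1 = M" by auto
  have leM: "\<forall>t<N. y t \<le> M" unfolding M_def by auto
  have "y r = M" using max_principle[OF wm harm leM paths[rule_format, OF s1(1)]] s1 by simp
  define y' where "y' = (\<lambda>t. - y t)"
  have harm': "\<forall>i<p. \<forall>s<N. (\<Sum>t<N. W i $$ (s,t) * (y' s - y' t)) = 0"
  proof (intro allI impI)
    fix i s assume "i < p" "s < N"
    then have "(\<Sum>t<N. W i $$ (s,t) * (y s - y t)) = 0" using harm by auto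
    then have "- (\<Sum>t<N. W i $$ (s,t) * (y s - y t)) = 0" by simp
    then show "(\<Sum>t<N. W i $$ (s,t) * (y' s - y' t)) = 0"
    proof -
      have "(\<Sum>t<N. W i $$ (s,t) * (y' s - y' t)) = (\<Sum>t<N. - (W i $$ (s,t) * (y s - y t)))"
        unfolding y'_def by (intro sum.cong refl) (simp add: algebra_simps)
      also have "\<dots> = - (\<Sum>t<N. W i $$ (s,t) * (y s - y t))" by (rule sum_negf)
      finally show ?thesis using \<open>- (\<Sum>t<N. W i $$ (s,t) * (y s - y t)) = 0\<close> by simp
    qed
  qed
  define M' where "M' = Max (y' ` {..<N})"
  have "M' \<in> y' ` {..<N}" unfolding M'_def using ne by (intro Max_in) auto
  then obtain s2 where s2: "s2 < N" "y' s2 = M'" by auto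
  have leM': "\<forall>t<N. y' t \<le> M'" unfolding M'_def by auto
  have "y' r = M'" using max_principle[OF wm harm' leM' paths[rule_format, OF s2(1)]] s2 by simp
  then have a2: "y' t \<le> y' r" using leM' t by simp
  have a1: "y t \<le> y r" using leM t \<open>y r = M\<close> by simp
  from a1 a2 show ?thesis unfolding y'_def by simp
qed


lemma kron_dim: "dim_row (kron_mat A B) = dim_row A * dim_row B"
  by (simp add: kron_mat_def)

lemma delta_entry:
  assumes gb: "\<forall>j<chi. gam j \<in> carrier_vec N \<and> bet j \<in> carrier_vec N"
    and x: "x \<in> carrier_vec (N*n)" and i: "i < N*n"
  shows "delta_map N n chi gam bet x $ i
    = x$i - (\<Sum>j<chi. gam j $ (i div n) * (\<Sum>s<N. bet j $ s * x$(s*n + i mod n)))"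
proof -
  let ?K = "\<lambda>j. kron_mat (mat_of_cols N [gam j] * mat_of_rows N [bet j]) (1\<^sub>m n) *\<^sub>v x"
  have Kc: "?K \<in> {..<chi} \<rightarrow> carrier_vec (N*n)"
    by (intro Pi_I carrier_vecI) (simp add: kron_dim)
  have "finsum_vec TYPE(real) (N * n) ?K {..<chi} $ i = (\<Sum>j<chi. ?K j $ i)"
    using i Kc by (intro index_finsum_vec) auto
  also have "\<dots> = (\<Sum>j<chi. gam j $ (i div n) * (\<Sum>s<N. bet j $ s * x$(s*n + i mod n)))"
  proof (rule sum.cong[OF refl])
    fix j assume "j \<in> {..<chi}"
    then show "?K j $ i = gam j $ (i div n) * (\<Sum>s<N. bet j $ s * x$(s*n + i mod n))"
      using gb x i by (intro kron_apply) auto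
  qed
  finally have e: "finsum_vec TYPE(real) (N * n) ?K {..<chi} $ i = \<dots>" .
  have "finsum_vec TYPE(real) (N * n) ?K {..<chi} \<in> carrier_vec (N*n)"
    using Kc by (intro finsum_vec_closed) auto
  then show ?thesis unfolding delta_map_def using i e by simp
qed

lemma delta_dim:
  "dim_vec (delta_map N n chi gam bet x) = N*n"
proof -
  let ?K = "\<lambda>j. kron_mat (mat_of_cols N [gam j] * mat_of_rows N [bet j]) (1\<^sub>m n) *\<^sub>v x"
  have Kc: "?K \<in> {..<chi} \<rightarrow> carrier_vec (N*n)"
    by (intro Pi_I carrier_vecI) (simp add: kron_dim)
  have "finsum_vec TYPE(real) (N * n) ?K {..<chi} \<in> carrier_vec (N*n)"
    using Kc by (intro finsum_vec_closed) auto
  then show ?thesis unfolding delta_map_def by simp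
qed


theorem lemma8:
  fixes N n p :: nat and W :: "nat \<Rightarrow> real mat"
    and chi :: "nat \<Rightarrow> nat" and R :: "nat \<Rightarrow> nat \<Rightarrow> nat set"
    and gam bet :: "nat \<Rightarrow> nat \<Rightarrow> real vec"
  assumes "n \<ge> 1"
    and "\<forall>i<p. weight_matrix N (W i)"
    and "has_spanning_tree N (\<Union>i<p. edges N (W i))"
    and "\<forall>i<p. reach_data N (W i) (chi i) (R i) (gam i) (bet i)"
  shows "{x \<in> carrier_vec (n * N). \<forall>i<p. delta_map N n (chi i) (gam i) (bet i) x = 0\<^sub>v (n * N)}
         = {kron_vec (ones_vec N) u | u. u \<in> carrier_vec n}"
proof -
  note wm = assms(2)
  have npos: "0 < n" using assms(1) by simp
  from assms(3) obtain r where r: "r < N" and paths: "\<forall>t<N. (r,t) \<in> (\<Union>i<p. edges N (W i))\<^sup>*"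
    unfolding has_spanning_tree_def by blast
  have gc: "gam i j \<in> carrier_vec N" and bc: "bet i j \<in> carrier_vec N"
    and Lg: "laplacian N (W i) *\<^sub>v gam i j = 0\<^sub>v N"
    if "i < p" "j < chi i" for i j
    using assms(4) that unfolding reach_data_def by auto
  have gsum: "finsum_vec TYPE(real) N (gam i) {..<chi i} = ones_vec N" if "i < p" for i
    using assms(4) that unfolding reach_data_def by auto
  have bzero: "bet i j $ s = 0" if "i < p" "j < chi i" "s < N" "s \<notin> root_set N (W i) (R i j)" for i j s
    using assms(4) that unfolding reach_data_def by auto
  have bone: "(\<Sum>s\<in>root_set N (W i) (R i j). bet i j $ s) = 1" if "i < p" "j < chi i" for i j
    using assms(4) that unfolding reach_data_def by auto
  have bsum: "(\<Sum>s<N. bet i j $ s) = 1" if "i < p" "j < chi i" for i j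
  proof -
    have "(\<Sum>s<N. bet i j $ s) = (\<Sum>s\<in>root_set N (W i) (R i j). bet i j $ s)"
      using bzero[OF that] by (intro sum.mono_neutral_right) (auto simp: root_set_def)
    then show ?thesis using bone[OF that] by simp
  qed
  have gb: "\<forall>j<chi i. gam i j \<in> carrier_vec N \<and> bet i j \<in> carrier_vec N" if "i < p" for i
    using gc bc that by auto
  have dimeq: "n * N = N * n" by simp
  show ?thesis
  proof (intro equalityI subsetI)
    fix x assume "x \<in> {x \<in> carrier_vec (n * N). \<forall>i<p. delta_map N n (chi i) (gam i) (bet i) x = 0\<^sub>v (n * N)}"
    then have x: "x \<in> carrier_vec (N*n)" and d: "\<forall>i<p. delta_map N n (chi i) (gam i) (bet i) x = 0\<^sub>v (n * N)"
      by (auto simp: mult.commute)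
    have xe: "x$a = (\<Sum>j<chi i. gam i j $ (a div n) * (\<Sum>s<N. bet i j $ s * x$(s*n + a mod n)))"
      if "i < p" "a < N*n" for i a
    proof -
      have "delta_map N n (chi i) (gam i) (bet i) x $ a = 0" using d that by (simp add: mult.commute)
      then show ?thesis using delta_entry[OF gb[OF that(1)] x that(2)] by simp
    qed
    have const: "x$(t*n+k) = x$(r*n+k)" if t: "t < N" and k: "k < n" for t k
    proof -
      define y where "y = (\<lambda>t. x$(t*n+k))"
      have harm: "\<forall>i<p. \<forall>s<N. (\<Sum>t<N. W i $$ (s,t) * (y s - y t)) = 0"
      proof (intro allI impI)
        fix i s assume i: "i < p" and s: "s < N"
        define c where "c = (\<lambda>j. \<Sum>s<N. bet i j $ s * x$(s*n + k))"
        have idx: "t*n+k < N*n" if "t < N" for t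
        proof -
          have "t*n+k < t*n+n" using k by simp
          also have "\<dots> = Suc t * n" by simp
          also have "\<dots> \<le> N*n" using that by (intro mult_le_mono1) simp
          finally show ?thesis .
        qed
        have ye: "y t = (\<Sum>j<chi i. gam i j $ t * c j)" if "t < N" for t
          using xe[OF i idx[OF that]] npos k unfolding y_def c_def by (simp add: mult.commute)
        have "(\<Sum>t<N. W i $$ (s,t) * (y s - y t)) = (\<Sum>t<N. laplacian N (W i) $$ (s,t) * y t)"
          using lap_harm[OF s] by simp
        also have "\<dots> = (\<Sum>t<N. laplacian N (W i) $$ (s,t) * (\<Sum>j<chi i. gam i j $ t * c j))"
          using ye by (intro sum.cong refl) auto
        also have "\<dots> = (\<Sum>t<N. \<Sum>j<chi i. c j * (laplacian N (W i) $$ (s,t) * gam i j $ t))"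
          by (intro sum.cong refl) (simp add: sum_distrib_left mult_ac)
        also have "\<dots> = (\<Sum>j<chi i. \<Sum>t<N. c j * (laplacian N (W i) $$ (s,t) * gam i j $ t))"
          by (rule sum.swap)
        also have "\<dots> = (\<Sum>j<chi i. c j * (\<Sum>t<N. laplacian N (W i) $$ (s,t) * gam i j $ t))"
          by (intro sum.cong refl) (simp only: sum_distrib_left)
        also have "\<dots> = 0"
        proof (intro sum.neutral ballI)
          fix j assume j: "j \<in> {..<chi i}"
          have "(laplacian N (W i) *\<^sub>v gam i j) $ s = 0" using Lg[OF i] j s by simp
          moreover have "(laplacian N (W i) *\<^sub>v gam i j) $ s = (\<Sum>t<N. laplacian N (W i) $$ (s,t) * gam i j $ t)"
          proof -
            have hd: "dim_vec (gam i j) = N" using gc[OF i] j by auto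
            have L: "laplacian N (W i) \<in> carrier_mat N N" by (simp add: laplacian_def)
            show ?thesis using s L hd by (auto simp: scalar_prod_def lessThan_atLeast0 intro!: sum.cong)
          qed
          ultimately show "c j * (\<Sum>t<N. laplacian N (W i) $$ (s,t) * gam i j $ t) = 0" by simp
        qed
        finally show "(\<Sum>t<N. W i $$ (s,t) * (y s - y t)) = 0" .
      qed
      have "y t = y r" by (rule const_principle[OF wm harm r paths t])
      then show ?thesis unfolding y_def .
    qed
    define u where "u = vec n (\<lambda>k. x$(r*n+k))"
    have "x = kron_vec (ones_vec N) u"
    proof (rule eq_vecI)
      show "dim_vec x = dim_vec (kron_vec (ones_vec N) u)" using x by (simp add: kron_vec_def u_def ones_vec_def)
    next
      fix a assume "a < dim_vec (kron_vec (ones_vec N) u)"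
      then have a: "a < N*n" by (simp add: kron_vec_def u_def ones_vec_def)
      have ad: "a div n < N" using a by (simp add: less_mult_imp_div_less)
      have am: "a mod n < n" using npos by simp
      have "x$a = x$((a div n)*n + a mod n)" by simp
      also have "\<dots> = x$(r*n + a mod n)" using const[OF ad am] .
      finally show "x$a = kron_vec (ones_vec N) u $ a"
        using a ad am by (simp add: kron_vec_def u_def ones_vec_def)
    qed
    then show "x \<in> {kron_vec (ones_vec N) u | u. u \<in> carrier_vec n}" unfolding u_def by auto
  next
    fix x assume "x \<in> {kron_vec (ones_vec N) u | u. u \<in> carrier_vec n}"
    then obtain u where u: "u \<in> carrier_vec n" and xd: "x = kron_vec (ones_vec N) u" by auto
    have x: "x \<in> carrier_vec (N*n)" using u xd by (simp add: kron_vec_def ones_vec_def)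
    have xi: "x$a = u$(a mod n)" if "a < N*n" for a
    proof -
      have "a div n < N" using that by (simp add: less_mult_imp_div_less)
      then show ?thesis using that u xd by (simp add: kron_vec_def ones_vec_def)
    qed
    have "delta_map N n (chi i) (gam i) (bet i) x = 0\<^sub>v (n * N)" if i: "i < p" for i
    proof (rule eq_vecI)
      show "dim_vec (delta_map N n (chi i) (gam i) (bet i) x) = dim_vec (0\<^sub>v (n * N))"
        by (simp add: delta_dim)
    next
      fix a assume "a < dim_vec (0\<^sub>v (n * N))"
      then have a: "a < N*n" by (simp add: mult.commute)
      have ad: "a div n < N" using a by (simp add: less_mult_imp_div_less)
      have am: "a mod n < n" using npos by simp
      have idx: "s*n + a mod n < N*n" if "s < N" for s
      proof -
        have "s*n+a mod n < s*n+n" using am by simp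
        also have "\<dots> = Suc s * n" by simp
        also have "\<dots> \<le> N*n" using that by (intro mult_le_mono1) simp
        finally show ?thesis .
      qed
      have xs: "x$(s*n + a mod n) = u$(a mod n)" if "s < N" for s
        using xi[OF idx[OF that]] npos by simp
      have "(\<Sum>j<chi i. gam i j $ (a div n) * (\<Sum>s<N. bet i j $ s * x$(s*n + a mod n)))
          = (\<Sum>j<chi i. gam i j $ (a div n) * (u$(a mod n) * (\<Sum>s<N. bet i j $ s)))"
        using xs by (intro sum.cong refl) (simp add: sum_distrib_left mult.commute)
      also have "\<dots> = (\<Sum>j<chi i. gam i j $ (a div n)) * u$(a mod n)"
        using bsum[OF i] by (simp add: sum_distrib_right)
      also have "(\<Sum>j<chi i. gam i j $ (a div n)) = finsum_vec TYPE(real) N (gam i) {..<chi i} $ (a div n)"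
        using ad gc[OF i] by (intro index_finsum_vec[symmetric]) auto
      also have "\<dots> = 1" using gsum[OF i] ad by (simp add: ones_vec_def)
      finally show "delta_map N n (chi i) (gam i) (bet i) x $ a = 0\<^sub>v (n * N) $ a"
        using delta_entry[OF gb[OF i] x a] xi[OF a] a by (simp add: mult.commute)
    qed
    then show "x \<in> {x \<in> carrier_vec (n * N). \<forall>i<p. delta_map N n (chi i) (gam i) (bet i) x = 0\<^sub>v (n * N)}"
      using x by (simp add: mult.commute)
  qed
qed

end
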